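(* Let $v:\mathbb{R}^n\to(0,\infty)$ be continuous and let $C_0>0$. The following are equivalent: (1) $v(x+y)\le C_0\,v(x)v(y)$ for all $x,y\in\mathbb{R}^n$; (2) for all $1\le p,q,r\le\infty$ with $1+\frac1r=\frac1p+\frac1q$ and all measurable $f_1,f_2:\mathbb{R}^n\to\mathbb{C}$, \[ \|(f_1*f_2)v\|_r\le C_0\,\|f_1v\|_p\,\|f_2v\|_q . \]
   Context: $\|\cdot\|_p$ denotes the $L^p(\mathbb{R}^n)$ norm and $*$ the convolution on $\mathbb{R}^n$. *)

theory Defs
  imports "HOL-Analysis.Analysis"
begin

definition Lp_norm :: "ennreal \<Rightarrow> ('a::euclidean_space \<Rightarrow> complex) \<Rightarrow> ennreal" where
  "Lp_norm p f =
     (if p = top then Inf {c. AE x in lebesgue. ennreal (cmod (f x)) \<le> c}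
      else (let I = (\<integral>\<^sup>+ x. ennreal (cmod (f x) powr enn2real p) \<partial>lebesgue)
            in if I = top then top else ennreal (enn2real I powr (1 / enn2real p))))"

definition conv :: "('a::euclidean_space \<Rightarrow> complex) \<Rightarrow> ('a \<Rightarrow> complex) \<Rightarrow> 'a \<Rightarrow> complex" where
  "conv f g x = (\<integral> y. f (x - y) * g y \<partial>lebesgue)"

end

theory Submission
  imports Defs
begin

lemma distr_reflect: "distr lborel borel (\<lambda>y. x - y) = (lborel :: 'a::euclidean_space measure)"
proof -
  have "lborel = density (distr lborel borel (\<lambda>y. x + (-1::real) *\<^sub>R y)) (\<lambda>_. \<bar>-1::real\<bar>^DIM('a))"
    by (rule lborel_affine) simp
  then show ?thesis by (simp add: density_1)
qed

lemma distr_reflect_lborel: "distr lborel lborel (\<lambda>y. x - y) = (lborel :: 'a::euclidean_space measure)"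
  using distr_reflect[of x] by (metis distr_cong sets_lborel)

lemma AE_reflect_lborel:
  fixes x :: "'a::euclidean_space"
  assumes "AE z in lborel. P z" shows "AE y in lborel. P (x - y)"
proof -
  from assms obtain N where N: "N \<in> null_sets lborel" "{z \<in> space lborel. \<not> P z} \<subseteq> N"
    unfolding eventually_ae_filter by blast
  have "emeasure lborel ((\<lambda>y. x - y) -` N \<inter> space lborel) = emeasure (distr lborel borel (\<lambda>y. x - y)) N"
    using N by (subst emeasure_distr) auto
  also have "\<dots> = 0" using N by (simp add: distr_reflect null_sets_def)
  moreover have "(\<lambda>y. x - y) -` N \<inter> space lborel \<in> sets lborel"
    using N by (intro measurable_sets[where A=lborel]) auto
  ultimately have "(\<lambda>y. x - y) -` N \<inter> space lborel \<in> null_sets lborel"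
    by (auto simp: null_sets_def)
  then show ?thesis
    by (rule AE_I') (use N in auto)
qed

lemma AE_reflect:
  fixes x :: "'a::euclidean_space"
  assumes "AE z in lebesgue. P z" shows "AE y in lebesgue. P (x - y)"
  using assms unfolding AE_completion_iff by (rule AE_reflect_lborel)

lemma reflect_measurable_lebesgue:
  fixes x :: "'a::euclidean_space"
  shows "(\<lambda>y. x - y) \<in> lebesgue \<rightarrow>\<^sub>M lebesgue"
proof (rule completion.measurable_completion2)
  show "(\<lambda>y. x - y) \<in> lebesgue \<rightarrow>\<^sub>M lborel"
    by (intro measurable_completion) simp
  have "distr lebesgue lborel (\<lambda>y. x - y) = distr lborel lborel (\<lambda>y. x - y)"
    by (rule distr_completion) simp
  then show "null_sets lborel \<subseteq> null_sets (distr lebesgue lborel (\<lambda>y. x - y))"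
    by (simp add: distr_reflect_lborel)
qed

lemma measurable_reflect:
  fixes x :: "'a::euclidean_space"
  assumes "F \<in> borel_measurable lebesgue"
  shows "(\<lambda>y. F (x - y)) \<in> borel_measurable lebesgue"
  using measurable_compose[OF reflect_measurable_lebesgue assms] by simp

lemma nn_integral_reflect_lborel:
  fixes x :: "'a::euclidean_space" and h :: "'a \<Rightarrow> ennreal"
  assumes "h \<in> borel_measurable borel"
  shows "(\<integral>\<^sup>+y. h (x - y) \<partial>lborel) = (\<integral>\<^sup>+y. h y \<partial>lborel)"
proof -
  have "(\<integral>\<^sup>+y. h y \<partial>lborel) = (\<integral>\<^sup>+y. h y \<partial>distr lborel borel (\<lambda>y. x - y))"
    by (simp add: distr_reflect)
  also have "\<dots> = (\<integral>\<^sup>+y. h (x - y) \<partial>lborel)"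
    using assms by (subst nn_integral_distr) auto
  finally show ?thesis ..
qed

lemma nn_integral_reflect:
  fixes x :: "'a::euclidean_space" and h :: "'a \<Rightarrow> ennreal"
  assumes "h \<in> borel_measurable lebesgue"
  shows "(\<integral>\<^sup>+y. h (x - y) \<partial>lebesgue) = (\<integral>\<^sup>+y. h y \<partial>lebesgue)"
proof -
  obtain h' where h': "h' \<in> borel_measurable lborel" "AE z in lborel. h z = h' z"
    using completion_ex_borel_measurable[OF assms] by blast
  have "(\<integral>\<^sup>+y. h (x - y) \<partial>lebesgue) = (\<integral>\<^sup>+y. h (x - y) \<partial>lborel)"
    by (simp add: nn_integral_completion)
  also have "\<dots> = (\<integral>\<^sup>+y. h' (x - y) \<partial>lborel)"
    by (rule nn_integral_cong_AE) (rule AE_reflect_lborel[OF h'(2)])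
  also have "\<dots> = (\<integral>\<^sup>+y. h' y \<partial>lborel)"
    using h'(1) by (intro nn_integral_reflect_lborel) (simp add: measurable_lborel1)
  also have "\<dots> = (\<integral>\<^sup>+y. h y \<partial>lborel)"
    by (rule nn_integral_cong_AE) (use h'(2) in auto)
  also have "\<dots> = (\<integral>\<^sup>+y. h y \<partial>lebesgue)"
    by (simp add: nn_integral_completion)
  finally show ?thesis .
qed

lemma tonelli_conv:
  fixes u w :: "'a::euclidean_space \<Rightarrow> ennreal"
  assumes u: "u \<in> borel_measurable lebesgue" and w: "w \<in> borel_measurable lebesgue"
  shows "(\<integral>\<^sup>+x. (\<integral>\<^sup>+y. u (x - y) * w y \<partial>lebesgue) \<partial>lebesgue)
       = (\<integral>\<^sup>+x. u x \<partial>lebesgue) * (\<integral>\<^sup>+y. w y \<partial>lebesgue)"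
proof -
  obtain u' where u': "u' \<in> borel_measurable lborel" "AE z in lborel. u z = u' z"
    using completion_ex_borel_measurable[OF u] by blast
  obtain w' where w': "w' \<in> borel_measurable lborel" "AE z in lborel. w z = w' z"
    using completion_ex_borel_measurable[OF w] by blast
  have [measurable]: "u' \<in> borel_measurable borel" "w' \<in> borel_measurable borel"
    using u'(1) w'(1) by (simp_all add: measurable_lborel1)
  have inner: "(\<integral>\<^sup>+y. u (x - y) * w y \<partial>lebesgue) = (\<integral>\<^sup>+y. u' (x - y) * w' y \<partial>lborel)" for x
  proof -
    have "(\<integral>\<^sup>+y. u (x - y) * w y \<partial>lebesgue) = (\<integral>\<^sup>+y. u (x - y) * w y \<partial>lborel)"
      by (simp add: nn_integral_completion)
    also have "\<dots> = (\<integral>\<^sup>+y. u' (x - y) * w' y \<partial>lborel)"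
      using AE_reflect_lborel[OF u'(2), of x] w'(2)
      by (intro nn_integral_cong_AE) (auto elim!: eventually_elim2)
    finally show ?thesis .
  qed
  have transl: "(\<integral>\<^sup>+x. u' (x - y) \<partial>lborel) = (\<integral>\<^sup>+x. u' x \<partial>lborel)" for y
  proof -
    have "(\<integral>\<^sup>+x. u' x \<partial>lborel) = (\<integral>\<^sup>+x. u' x \<partial>distr lborel borel ((+) (-y)))"
      by (simp add: lborel_distr_plus)
    also have "\<dots> = (\<integral>\<^sup>+x. u' (- y + x) \<partial>lborel)"
      by (subst nn_integral_distr) auto
    finally show ?thesis by simp
  qed
  have "(\<integral>\<^sup>+x. (\<integral>\<^sup>+y. u (x - y) * w y \<partial>lebesgue) \<partial>lebesgue)
      = (\<integral>\<^sup>+x. (\<integral>\<^sup>+y. u' (x - y) * w' y \<partial>lborel) \<partial>lborel)"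
    unfolding inner by (simp add: nn_integral_completion)
  also have "\<dots> = (\<integral>\<^sup>+y. (\<integral>\<^sup>+x. u' (x - y) * w' y \<partial>lborel) \<partial>lborel)"
    by (rule lborel_pair.Fubini'[symmetric]) measurable
  also have "\<dots> = (\<integral>\<^sup>+y. (\<integral>\<^sup>+x. u' x \<partial>lborel) * w' y \<partial>lborel)"
    by (subst nn_integral_multc) (auto simp: transl)
  also have "\<dots> = (\<integral>\<^sup>+x. u' x \<partial>lborel) * (\<integral>\<^sup>+y. w' y \<partial>lborel)"
    by (subst nn_integral_cmult) (auto simp: mult.commute)
  also have "\<dots> = (\<integral>\<^sup>+x. u x \<partial>lebesgue) * (\<integral>\<^sup>+y. w y \<partial>lebesgue)"
    using u'(2) w'(2) by (simp add: nn_integral_completion nn_integral_cong_AE)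
  finally show ?thesis .
qed

lemma conv_nn_measurable:
  fixes u w :: "'a::euclidean_space \<Rightarrow> ennreal"
  assumes u: "u \<in> borel_measurable lebesgue" and w: "w \<in> borel_measurable lebesgue"
  shows "(\<lambda>x. \<integral>\<^sup>+y. u (x - y) * w y \<partial>lebesgue) \<in> borel_measurable lebesgue"
proof -
  obtain u' where u': "u' \<in> borel_measurable lborel" "AE z in lborel. u z = u' z"
    using completion_ex_borel_measurable[OF u] by blast
  obtain w' where w': "w' \<in> borel_measurable lborel" "AE z in lborel. w z = w' z"
    using completion_ex_borel_measurable[OF w] by blast
  have [measurable]: "u' \<in> borel_measurable borel" "w' \<in> borel_measurable borel"
    using u'(1) w'(1) by (simp_all add: measurable_lborel1)
  have inner: "(\<integral>\<^sup>+y. u (x - y) * w y \<partial>lebesgue) = (\<integral>\<^sup>+y. u' (x - y) * w' y \<partial>lborel)" for x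
  proof -
    have "(\<integral>\<^sup>+y. u (x - y) * w y \<partial>lebesgue) = (\<integral>\<^sup>+y. u (x - y) * w y \<partial>lborel)"
      by (simp add: nn_integral_completion)
    also have "\<dots> = (\<integral>\<^sup>+y. u' (x - y) * w' y \<partial>lborel)"
      using AE_reflect_lborel[OF u'(2), of x] w'(2)
      by (intro nn_integral_cong_AE) (auto elim!: eventually_elim2)
    finally show ?thesis .
  qed
  have "(\<lambda>x. \<integral>\<^sup>+y. u' (x - y) * w' y \<partial>lborel) \<in> borel_measurable lborel"
    by measurable
  then have "(\<lambda>x. \<integral>\<^sup>+y. u' (x - y) * w' y \<partial>lborel) \<in> borel_measurable lebesgue"
    by (rule measurable_completion)
  then show ?thesis unfolding inner .
qed

lemma amgm3:
  fixes X Y Z \<alpha> \<beta> \<gamma> :: real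
  assumes "X > 0" "Y > 0" "Z > 0" "\<alpha> \<ge> 0" "\<beta> \<ge> 0" "\<gamma> \<ge> 0" "\<alpha> + \<beta> + \<gamma> = 1"
  shows "X powr \<alpha> * Y powr \<beta> * Z powr \<gamma> \<le> \<alpha> * X + \<beta> * Y + \<gamma> * Z"
proof (cases "\<beta> + \<gamma> = 0")
  case True
  then have b: "\<beta> = 0" "\<gamma> = 0" "\<alpha> = 1" using assms by linarith+
  show ?thesis using assms unfolding b by simp
next
  case False
  define s where "s = \<beta> + \<gamma>"
  have s: "s > 0" using False assms s_def by linarith
  define W where "W = Y powr (\<beta>/s) * Z powr (\<gamma>/s)"
  have W: "W > 0" using assms by (simp add: W_def)
  have "W \<le> (\<beta>/s) * Y + (\<gamma>/s) * Z"
    unfolding W_def using assms s s_def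
    by (intro Youngs_inequality_0) (auto simp: add_divide_distrib[symmetric])
  have "W powr s = Y powr \<beta> * Z powr \<gamma>"
    using assms s by (simp add: W_def powr_mult powr_powr)
  have "X powr \<alpha> * W powr s \<le> \<alpha> * X + s * W"
    using assms s W s_def by (intro Youngs_inequality_0) auto
  also have "s * W \<le> s * ((\<beta>/s) * Y + (\<gamma>/s) * Z)"
    using \<open>W \<le> _\<close> s by (intro mult_left_mono) auto
  also have "\<dots> = \<beta> * Y + \<gamma> * Z" using s by (simp add: field_simps)
  finally show ?thesis using \<open>W powr s = _\<close> by (simp add: mult.assoc)
qed

lemma young3:
  fixes s t K A B \<alpha> \<beta> \<gamma> P Q :: real
  assumes st: "s \<ge> 0" "t \<ge> 0" and pos: "K > 0" "A > 0" "B > 0"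
    and w: "\<alpha> \<ge> 0" "\<beta> \<ge> 0" "\<gamma> \<ge> 0" "\<alpha> + \<beta> + \<gamma> = 1"
    and PQ: "P > 0" "Q > 0" "P * (\<alpha> + \<beta>) = 1" "Q * (\<alpha> + \<gamma>) = 1"
  shows "s * t \<le> K powr \<alpha> * A powr \<beta> * B powr \<gamma> *
           (\<alpha> * (s powr P * t powr Q) / K + \<beta> * s powr P / A + \<gamma> * t powr Q / B)"
proof (cases "s = 0 \<or> t = 0")
  case True
  have "0 \<le> K powr \<alpha> * A powr \<beta> * B powr \<gamma> *
           (\<alpha> * (s powr P * t powr Q) / K + \<beta> * s powr P / A + \<gamma> * t powr Q / B)"
    using assms by (intro mult_nonneg_nonneg add_nonneg_nonneg divide_nonneg_pos) auto
  then show ?thesis using True by auto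
next
  case False
  then have s: "s > 0" and t: "t > 0" using st by auto
  define c where "c = K powr \<alpha> * A powr \<beta> * B powr \<gamma>"
  have c: "c > 0" using pos by (simp add: c_def)
  define X where "X = s powr P * t powr Q / K"
  define Y where "Y = s powr P / A"
  define Z where "Z = t powr Q / B"
  have XYZ: "X > 0" "Y > 0" "Z > 0" using s t pos by (auto simp: X_def Y_def Z_def)
  have "X powr \<alpha> * Y powr \<beta> * Z powr \<gamma>
      = s powr (P * \<alpha> + P * \<beta>) * t powr (Q * \<alpha> + Q * \<gamma>) / c"
    using s t pos
    by (simp add: X_def Y_def Z_def c_def powr_divide powr_mult powr_powr powr_add field_simps)
  also have "\<dots> = s * t / c" using PQ s t by (simp add: distrib_left[symmetric])
  finally have eq: "X powr \<alpha> * Y powr \<beta> * Z powr \<gamma> = s * t / c" .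
  have "s * t / c \<le> \<alpha> * X + \<beta> * Y + \<gamma> * Z"
    using amgm3[OF XYZ w] eq by simp
  then have "s * t \<le> c * (\<alpha> * X + \<beta> * Y + \<gamma> * Z)"
    using c by (simp add: field_simps)
  then show ?thesis by (simp add: c_def X_def Y_def Z_def)
qed

lemma holder_pt:
  fixes F G :: "'a::euclidean_space \<Rightarrow> real" and x :: 'a
  assumes Fm: "F \<in> borel_measurable lebesgue" and Gm: "G \<in> borel_measurable lebesgue"
    and F0: "\<And>z. F z \<ge> 0" and G0: "\<And>z. G z \<ge> 0"
    and w: "\<alpha> \<ge> 0" "\<beta> \<ge> 0" "\<gamma> \<ge> 0" "\<alpha> + \<beta> + \<gamma> = 1"
    and PQ: "P > 0" "Q > 0" "P * (\<alpha> + \<beta>) = 1" "Q * (\<alpha> + \<gamma>) = 1"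
    and pos: "a > 0" "b > 0" "k > 0"
    and IA: "(\<integral>\<^sup>+z. ennreal (F z powr P) \<partial>lebesgue) = ennreal a"
    and IB: "(\<integral>\<^sup>+z. ennreal (G z powr Q) \<partial>lebesgue) = ennreal b"
    and IK: "\<alpha> = 0 \<or> (\<integral>\<^sup>+y. ennreal (F (x - y) powr P * G y powr Q) \<partial>lebesgue) \<le> ennreal k"
  shows "(\<integral>\<^sup>+y. ennreal (F (x - y) * G y) \<partial>lebesgue) \<le> ennreal (k powr \<alpha> * a powr \<beta> * b powr \<gamma>)"
proof -
  define c where "c = k powr \<alpha> * a powr \<beta> * b powr \<gamma>"
  have c: "c > 0" using pos by (simp add: c_def)
  have [measurable]: "(\<lambda>y. F (x - y)) \<in> borel_measurable lebesgue"
    by (rule measurable_reflect[OF Fm])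
  have [measurable]: "G \<in> borel_measurable lebesgue" by (rule Gm)
  have [measurable]: "F \<in> borel_measurable lebesgue" by (rule Fm)
  have pt: "ennreal (F (x - y) * G y) \<le>
      ennreal (c * \<alpha> / k) * ennreal (F (x - y) powr P * G y powr Q)
      + ennreal (c * \<beta> / a) * ennreal (F (x - y) powr P) + ennreal (c * \<gamma> / b) * ennreal (G y powr Q)" for y
  proof -
    have "F (x - y) * G y \<le> c * (\<alpha> * (F (x - y) powr P * G y powr Q) / k + \<beta> * F (x - y) powr P / a
        + \<gamma> * G y powr Q / b)"
      unfolding c_def by (rule young3) (use F0 G0 w PQ pos in auto)
    also have "\<dots> = (c * \<alpha> / k) * (F (x - y) powr P * G y powr Q) + (c * \<beta> / a) * F (x - y) powr P
        + (c * \<gamma> / b) * G y powr Q"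
      by (simp add: field_simps)
    finally have "ennreal (F (x - y) * G y) \<le> ennreal ((c * \<alpha> / k) * (F (x - y) powr P * G y powr Q)
        + (c * \<beta> / a) * F (x - y) powr P + (c * \<gamma> / b) * G y powr Q)"
      by (rule ennreal_leI)
    also have "\<dots> = ennreal (c * \<alpha> / k) * ennreal (F (x - y) powr P * G y powr Q)
      + ennreal (c * \<beta> / a) * ennreal (F (x - y) powr P) + ennreal (c * \<gamma> / b) * ennreal (G y powr Q)"
      using c w pos by (simp add: ennreal_plus[symmetric] ennreal_mult[symmetric] del: ennreal_plus)
    finally show ?thesis .
  qed
  have IA': "(\<integral>\<^sup>+y. ennreal (F (x - y) powr P) \<partial>lebesgue) = ennreal a"
    using nn_integral_reflect[of "\<lambda>z. ennreal (F z powr P)" x] IA by simp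
  have T1: "ennreal (c * \<alpha> / k) * (\<integral>\<^sup>+y. ennreal (F (x - y) powr P * G y powr Q) \<partial>lebesgue)
      \<le> ennreal (c * \<alpha>)"
  proof (cases "\<alpha> = 0")
    case True then show ?thesis by simp
  next
    case False
    then have "ennreal (c * \<alpha> / k) * (\<integral>\<^sup>+y. ennreal (F (x - y) powr P * G y powr Q) \<partial>lebesgue)
        \<le> ennreal (c * \<alpha> / k) * ennreal k"
      using IK by (intro mult_left_mono) auto
    also have "\<dots> = ennreal (c * \<alpha>)"
      using c w pos by (simp add: ennreal_mult[symmetric])
    finally show ?thesis .
  qed
  have "(\<integral>\<^sup>+y. ennreal (F (x - y) * G y) \<partial>lebesgue) \<le>
     (\<integral>\<^sup>+y. ennreal (c * \<alpha> / k) * ennreal (F (x - y) powr P * G y powr Q)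
      + ennreal (c * \<beta> / a) * ennreal (F (x - y) powr P) + ennreal (c * \<gamma> / b) * ennreal (G y powr Q) \<partial>lebesgue)"
    by (intro nn_integral_mono pt)
  also have "\<dots> = ennreal (c * \<alpha> / k) * (\<integral>\<^sup>+y. ennreal (F (x - y) powr P * G y powr Q) \<partial>lebesgue)
      + ennreal (c * \<beta> / a) * (\<integral>\<^sup>+y. ennreal (F (x - y) powr P) \<partial>lebesgue)
      + ennreal (c * \<gamma> / b) * (\<integral>\<^sup>+y. ennreal (G y powr Q) \<partial>lebesgue)"
    by (simp add: nn_integral_add nn_integral_cmult)
  also have "\<dots> \<le> ennreal (c * \<alpha>) + ennreal (c * \<beta>) + ennreal (c * \<gamma>)"
    using T1 c pos w by (auto simp: IA' IB ennreal_mult[symmetric] intro!: add_mono)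
  also have "\<dots> = ennreal c"
    using c w by (simp add: ennreal_plus[symmetric] distrib_left[symmetric] del: ennreal_plus)
  finally show ?thesis by (simp add: c_def)
qed

lemma Lp_top_upper_AE:
  "AE x in lebesgue. ennreal (cmod (f x)) \<le> c \<Longrightarrow> Lp_norm top f \<le> c"
  unfolding Lp_norm_def by (auto intro: Inf_lower)

lemma Lp_top_upper:
  "(\<And>x. ennreal (cmod (f x)) \<le> c) \<Longrightarrow> Lp_norm top f \<le> c"
  by (rule Lp_top_upper_AE) auto

lemma Lp_top_AE:
  fixes f :: "'a::euclidean_space \<Rightarrow> complex"
  shows "AE x in lebesgue. ennreal (cmod (f x)) \<le> Lp_norm top f"
proof (cases "Lp_norm top f = top")
  case True then show ?thesis by simp
next
  case False
  define s where "s = Lp_norm top f"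
  have s: "s = Inf {c. AE x in lebesgue. ennreal (cmod (f x)) \<le> c}"
    by (simp add: s_def Lp_norm_def)
  have "s < top" using False s_def by (simp add: top.not_eq_extremum)
  have "AE x in lebesgue. ennreal (cmod (f x)) \<le> s + ennreal (1 / real (Suc n))" for n
  proof -
    have "s < s + ennreal (1 / real (Suc n))"
    proof -
      obtain r where r: "s = ennreal r" "r \<ge> 0" using \<open>s < top\<close> by (cases s) auto
      have "ennreal r < ennreal (r + 1 / real (Suc n))" using r by (intro ennreal_lessI add_nonneg_pos) auto
      then show ?thesis using r by (simp add: ennreal_plus[symmetric] del: ennreal_plus)
    qed
    then obtain c where "c \<in> {c. AE x in lebesgue. ennreal (cmod (f x)) \<le> c}"
      "c < s + ennreal (1 / real (Suc n))"
      unfolding s by (auto simp: Inf_less_iff)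
    then have c: "AE x in lebesgue. ennreal (cmod (f x)) \<le> c" "c < s + ennreal (1 / real (Suc n))"
      by auto
    from c(1) show ?thesis
      by (rule eventually_mono) (meson c(2) order.trans less_imp_le)
  qed
  then have "AE x in lebesgue. \<forall>n. ennreal (cmod (f x)) \<le> s + ennreal (1 / real (Suc n))"
    by (simp add: AE_all_countable)
  then show ?thesis
  proof (rule eventually_mono)
    fix x assume H: "\<forall>n. ennreal (cmod (f x)) \<le> s + ennreal (1 / real (Suc n))"
    show "ennreal (cmod (f x)) \<le> Lp_norm top f"
      unfolding s_def[symmetric]
    proof (rule ennreal_le_epsilon)
      fix e :: real assume "0 < e"
      then obtain n where n: "1 / real (Suc n) < e" by (rule nat_approx_posE)
      have "ennreal (cmod (f x)) \<le> s + ennreal (1 / real (Suc n))" using H by blast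
      also have "\<dots> \<le> s + ennreal e" using n by (intro add_left_mono ennreal_leI) simp
      finally show "ennreal (cmod (f x)) \<le> s + ennreal e" .
    qed
  qed
qed

lemma Lp_zero_fun: "Lp_norm r (\<lambda>x. 0 :: complex) = 0"
proof (cases "r = top")
  case True then show ?thesis using Lp_top_upper[of "\<lambda>x. 0" 0] by simp
next
  case False
  have "(\<lambda>x. ennreal (cmod (0::complex) powr enn2real r)) = (\<lambda>x. 0)" by simp
  then show ?thesis using False unfolding Lp_norm_def by (simp add: Let_def)
qed

lemma Lp_one: "Lp_norm 1 f = (\<integral>\<^sup>+x. ennreal (cmod (f x)) \<partial>lebesgue)"
proof -
  define I where "I = (\<integral>\<^sup>+x. ennreal (cmod (f x)) \<partial>lebesgue)"
  have eq: "(\<integral>\<^sup>+x. ennreal (cmod (f x) powr enn2real 1) \<partial>lebesgue) = I" by (simp add: I_def)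
  have "Lp_norm 1 f = (if I = top then top else ennreal (enn2real I powr (1 / enn2real 1)))"
    unfolding Lp_norm_def Let_def eq by simp
  also have "\<dots> = I" by (cases I) auto
  finally show ?thesis by (simp add: I_def)
qed

lemma Lp_fin:
  assumes "p \<noteq> top" "Lp_norm p f \<noteq> top"
  obtains a where "a \<ge> 0" "(\<integral>\<^sup>+x. ennreal (cmod (f x) powr enn2real p) \<partial>lebesgue) = ennreal a"
    "Lp_norm p f = ennreal (a powr (1 / enn2real p))"
proof -
  define I where "I = (\<integral>\<^sup>+x. ennreal (cmod (f x) powr enn2real p) \<partial>lebesgue)"
  have L: "Lp_norm p f = (if I = top then top else ennreal (enn2real I powr (1 / enn2real p)))"
    using assms(1) unfolding Lp_norm_def Let_def I_def by simp
  have "I \<noteq> top" using assms(2) L by auto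
  then have "I = ennreal (enn2real I)" by (cases I) auto
  moreover have "Lp_norm p f = ennreal (enn2real I powr (1 / enn2real p))"
    using L \<open>I \<noteq> top\<close> by simp
  ultimately show ?thesis using that[of "enn2real I"] unfolding I_def by simp
qed

lemma Lp_fin_upper:
  assumes "p \<noteq> top" "enn2real p > 0" "T \<ge> 0"
    and "(\<integral>\<^sup>+x. ennreal (cmod (f x) powr enn2real p) \<partial>lebesgue) \<le> ennreal (T powr enn2real p)"
  shows "Lp_norm p f \<le> ennreal T"
proof -
  define I where "I = (\<integral>\<^sup>+x. ennreal (cmod (f x) powr enn2real p) \<partial>lebesgue)"
  have "I \<noteq> top" using assms(4) unfolding I_def by (auto simp: top_unique)
  have "enn2real I \<le> T powr enn2real p"
    using assms(4) unfolding I_def by (intro enn2real_leI) auto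
  then have "enn2real I powr (1 / enn2real p) \<le> (T powr enn2real p) powr (1 / enn2real p)"
    by (intro powr_mono2) auto
  also have "\<dots> = T" using assms by (simp add: powr_powr)
  finally have le: "enn2real I powr (1 / enn2real p) \<le> T" .
  have "Lp_norm p f = ennreal (enn2real I powr (1 / enn2real p))"
    using assms(1) \<open>I \<noteq> top\<close> unfolding Lp_norm_def I_def Let_def by simp
  then show ?thesis using le by (simp add: ennreal_leI)
qed

lemma Lp_zero_AE:
  fixes f :: "'a::euclidean_space \<Rightarrow> complex"
  assumes "Lp_norm p f = 0" "1 \<le> p" "f \<in> borel_measurable lebesgue"
  shows "AE x in lebesgue. f x = 0"
proof (cases "p = top")
  case True
  have "AE x in lebesgue. ennreal (cmod (f x)) \<le> 0" using Lp_top_AE[of f] assms(1) True by simp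
  then show ?thesis by (rule eventually_mono) simp
next
  case False
  have P: "enn2real p > 0"
    using assms(2) False by (cases p) (auto simp: ennreal_1[symmetric] simp del: ennreal_1)
  have "Lp_norm p f \<noteq> top" using assms by simp
  then obtain a where a: "a \<ge> 0" "(\<integral>\<^sup>+x. ennreal (cmod (f x) powr enn2real p) \<partial>lebesgue) = ennreal a"
    "Lp_norm p f = ennreal (a powr (1 / enn2real p))"
    using Lp_fin False by blast
  then have "a powr (1 / enn2real p) \<le> 0" using assms(1) by simp
  then have "a powr (1 / enn2real p) = 0" using powr_ge_zero[of a "1 / enn2real p"] by linarith
  then have "a = 0" by simp
  then have "(\<integral>\<^sup>+x. ennreal (cmod (f x) powr enn2real p) \<partial>lebesgue) = 0" using a by simp
  moreover have "(\<lambda>x. ennreal (cmod (f x) powr enn2real p)) \<in> borel_measurable lebesgue"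
    using assms(3) by measurable
  ultimately have "AE x in lebesgue. ennreal (cmod (f x) powr enn2real p) = 0"
    by (simp add: nn_integral_0_iff_AE)
  then show ?thesis by (rule eventually_mono) simp
qed

lemma ennreal_ge1_cases:
  assumes "1 \<le> (p::ennreal)"
  obtains "p = top" | P where "p = ennreal P" "P \<ge> 1" "inverse p = ennreal (1 / P)" "enn2real p = P"
proof (cases "p = top")
  case True then show ?thesis using that by simp
next
  case False
  then obtain P where P: "p = ennreal P" "P \<ge> 0" by (cases p) auto
  then have "P \<ge> 1" using assms by (simp add: ennreal_1[symmetric] del: ennreal_1)
  moreover have "inverse p = ennreal (1 / P)"
    using P \<open>P \<ge> 1\<close> by (simp add: inverse_ennreal divide_inverse)
  ultimately show ?thesis using that P by simp
qed

lemma ennreal_eq3: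
  assumes "1 + ennreal a = ennreal b + ennreal c" "a \<ge> 0" "b \<ge> 0" "c \<ge> 0"
  shows "1 + a = b + c"
proof -
  have e1: "ennreal (1 + a) = 1 + ennreal a" using assms by (simp add: ennreal_plus)
  have e2: "ennreal (b + c) = ennreal b + ennreal c" using assms by (simp add: ennreal_plus)
  have "ennreal (1 + a) = ennreal (b + c)"
    by (simp only: e1 e2 assms(1))
  moreover have "0 \<le> 1 + a" "0 \<le> b + c" using assms by auto
  ultimately show ?thesis using ennreal_inj[of "1+a" "b+c"] by blast
qed

lemma ennreal_eq2:
  assumes "1 = ennreal b + ennreal c" "b \<ge> 0" "c \<ge> 0"
  shows "1 = b + c"
proof -
  have e2: "ennreal (b + c) = ennreal b + ennreal c" using assms by (simp add: ennreal_plus)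
  have "ennreal 1 = ennreal (b + c)"
    by (simp only: e2 assms(1)[symmetric] ennreal_1)
  moreover have "0 \<le> (1::real)" "0 \<le> b + c" using assms by auto
  ultimately show ?thesis using ennreal_inj[of "1" "b+c"] by blast
qed

lemma powr_prod_zero:
  fixes s t P Q :: real
  assumes "s \<ge> 0" "t \<ge> 0" "s powr P * t powr Q \<le> 0"
  shows "s * t \<le> 0"
proof -
  have "s powr P * t powr Q \<ge> 0" by simp
  then have "s powr P * t powr Q = 0" using assms(3) by linarith
  then have "s = 0 \<or> t = 0" by simp
  then show ?thesis by auto
qed

lemma young_fin:
  fixes F G Hc :: "'a::euclidean_space \<Rightarrow> real"
  assumes Fm: "F \<in> borel_measurable lebesgue" and Gm: "G \<in> borel_measurable lebesgue"
    and F0: "\<And>z. F z \<ge> 0" and G0: "\<And>z. G z \<ge> 0" and Hc0: "\<And>z. Hc z \<ge> 0"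
    and C0: "C0 > 0"
    and PB: "\<And>x. ennreal (Hc x) \<le> ennreal C0 * (\<integral>\<^sup>+y. ennreal (F (x - y) * G y) \<partial>lebesgue)"
    and PQR: "P \<ge> 1" "Q \<ge> 1" "R \<ge> 1" "1 + 1/R = 1/P + 1/Q"
    and pos: "a > 0" "b > 0"
    and IA: "(\<integral>\<^sup>+z. ennreal (F z powr P) \<partial>lebesgue) = ennreal a"
    and IB: "(\<integral>\<^sup>+z. ennreal (G z powr Q) \<partial>lebesgue) = ennreal b"
  shows "(\<integral>\<^sup>+x. ennreal (Hc x powr R) \<partial>lebesgue) \<le> ennreal ((C0 * a powr (1/P) * b powr (1/Q)) powr R)"
proof -
  define \<alpha> where "\<alpha> = 1 / R"
  define \<beta> where "\<beta> = 1 / P - 1 / R"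
  define \<gamma> where "\<gamma> = 1 / Q - 1 / R"
  have w: "\<alpha> \<ge> 0" "\<beta> \<ge> 0" "\<gamma> \<ge> 0" "\<alpha> + \<beta> + \<gamma> = 1"
  proof -
    have "1 / Q \<le> 1" "1 / P \<le> 1" "1 / R > 0" using PQR by auto
    then have "1 / R \<le> 1 / P" "1 / R \<le> 1 / Q" using PQR(4) by linarith+
    then show "\<alpha> \<ge> 0" "\<beta> \<ge> 0" "\<gamma> \<ge> 0" "\<alpha> + \<beta> + \<gamma> = 1"
      using PQR unfolding \<alpha>_def \<beta>_def \<gamma>_def by auto
  qed
  have PQ: "P > 0" "Q > 0" "P * (\<alpha> + \<beta>) = 1" "Q * (\<alpha> + \<gamma>) = 1"
    using PQR by (auto simp: \<alpha>_def \<beta>_def \<gamma>_def)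
  have [measurable]: "F \<in> borel_measurable lebesgue" "G \<in> borel_measurable lebesgue"
    using Fm Gm by auto
  define K where "K x = (\<integral>\<^sup>+y. ennreal (F (x - y) powr P * G y powr Q) \<partial>lebesgue)" for x
  have Kprod: "K x = (\<integral>\<^sup>+y. ennreal (F (x - y) powr P) * ennreal (G y powr Q) \<partial>lebesgue)" for x
    unfolding K_def by (simp add: ennreal_mult)
  have Kint: "(\<integral>\<^sup>+x. K x \<partial>lebesgue) = ennreal a * ennreal b"
    unfolding Kprod
    using tonelli_conv[of "\<lambda>z. ennreal (F z powr P)" "\<lambda>z. ennreal (G z powr Q)"] IA IB by simp
  have Km: "K \<in> borel_measurable lebesgue"
    using conv_nn_measurable[of "\<lambda>z. ennreal (F z powr P)" "\<lambda>z. ennreal (G z powr Q)"]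
    unfolding Kprod[abs_def] by simp
  define const where "const = C0 powr R * a powr (R * \<beta>) * b powr (R * \<gamma>)"
  have const: "const > 0" using C0 pos by (simp add: const_def)
  have pt: "ennreal (Hc x powr R) \<le> ennreal const * K x" for x
  proof (cases "K x = top")
    case True then show ?thesis using const by simp
  next
    case Ktop: False
    show ?thesis
    proof (cases "K x = 0")
      case True
      have "(\<lambda>y. ennreal (F (x - y) powr P * G y powr Q)) \<in> borel_measurable lebesgue"
        using measurable_reflect[OF Fm, of x] by measurable
      then have "AE y in lebesgue. ennreal (F (x - y) powr P * G y powr Q) = 0"
        using True unfolding K_def by (simp add: nn_integral_0_iff_AE)
      then have "AE y in lebesgue. ennreal (F (x - y) * G y) = 0"
        by (rule eventually_mono) (simp add: ennreal_eq_0_iff powr_prod_zero F0 G0)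
      then have "(\<integral>\<^sup>+y. ennreal (F (x - y) * G y) \<partial>lebesgue) = 0"
        by (simp add: nn_integral_cong_AE)
      then have "Hc x = 0" using PB[of x] Hc0[of x] by simp
      then show ?thesis by simp
    next
      case False
      define k where "k = enn2real (K x)"
      have Kk: "K x = ennreal k" using Ktop by (cases "K x") (auto simp: k_def)
      have "k \<noteq> 0" using False Kk by auto
      moreover have "k \<ge> 0" unfolding k_def by (rule enn2real_nonneg)
      ultimately have k: "k > 0" by linarith
      have H: "(\<integral>\<^sup>+y. ennreal (F (x - y) * G y) \<partial>lebesgue) \<le> ennreal (k powr \<alpha> * a powr \<beta> * b powr \<gamma>)"
        by (rule holder_pt[OF Fm Gm F0 G0 w PQ pos k IA IB]) (use Kk K_def in auto)
      define M where "M = C0 * (k powr \<alpha> * a powr \<beta> * b powr \<gamma>)"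
      have "ennreal (Hc x) \<le> ennreal C0 * ennreal (k powr \<alpha> * a powr \<beta> * b powr \<gamma>)"
        using PB[of x] H by (meson mult_left_mono order.trans zero_le)
      also have "\<dots> = ennreal M" using C0 by (simp add: M_def ennreal_mult)
      finally have "Hc x \<le> M" using C0 pos k by (simp add: M_def)
      then have "Hc x powr R \<le> M powr R" using Hc0 PQR by (intro powr_mono2) auto
      also have "\<dots> = const * k"
        using C0 pos k PQR
        by (simp add: M_def const_def powr_mult powr_powr \<alpha>_def mult.commute)
      finally have "ennreal (Hc x powr R) \<le> ennreal (const * k)" by (rule ennreal_leI)
      then show ?thesis using const k Kk by (simp add: ennreal_mult)
    qed
  qed
  have "(\<integral>\<^sup>+x. ennreal (Hc x powr R) \<partial>lebesgue) \<le> (\<integral>\<^sup>+x. ennreal const * K x \<partial>lebesgue)"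
    by (intro nn_integral_mono pt)
  also have "\<dots> = ennreal const * (ennreal a * ennreal b)"
    using Km by (simp add: nn_integral_cmult Kint)
  also have "\<dots> = ennreal (const * a * b)" using const pos by (simp add: ennreal_mult mult.assoc)
  also have "const * a * b = (C0 * a powr (1/P) * b powr (1/Q)) powr R"
  proof -
    have "(C0 * a powr (1/P) * b powr (1/Q)) powr R = C0 powr R * a powr (R / P) * b powr (R / Q)"
      using C0 pos by (simp add: powr_mult powr_powr mult.commute)
    moreover have "R / P = R * \<beta> + 1" "R / Q = R * \<gamma> + 1"
      using PQR by (auto simp: \<beta>_def \<gamma>_def field_simps)
    ultimately show ?thesis
      using pos by (simp add: const_def powr_add)
  qed
  finally show ?thesis .
qed

lemma young_inf:
  fixes F G Hc :: "'a::euclidean_space \<Rightarrow> real"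
  assumes Fm: "F \<in> borel_measurable lebesgue" and Gm: "G \<in> borel_measurable lebesgue"
    and F0: "\<And>z. F z \<ge> 0" and G0: "\<And>z. G z \<ge> 0"
    and C0: "C0 > 0"
    and PB: "\<And>x. ennreal (Hc x) \<le> ennreal C0 * (\<integral>\<^sup>+y. ennreal (F (x - y) * G y) \<partial>lebesgue)"
    and PQ: "P > 0" "Q > 0" "1/P + 1/Q = 1"
    and pos: "a > 0" "b > 0"
    and IA: "(\<integral>\<^sup>+z. ennreal (F z powr P) \<partial>lebesgue) = ennreal a"
    and IB: "(\<integral>\<^sup>+z. ennreal (G z powr Q) \<partial>lebesgue) = ennreal b"
  shows "ennreal (Hc x) \<le> ennreal (C0 * a powr (1/P) * b powr (1/Q))"
proof -
  have w: "(0::real) \<ge> 0" "1/P \<ge> 0" "1/Q \<ge> 0" "0 + 1/P + 1/Q = 1" using PQ by auto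
  have PQ': "P > 0" "Q > 0" "P * (0 + 1/P) = 1" "Q * (0 + 1/Q) = 1" using PQ by auto
  have H: "(\<integral>\<^sup>+y. ennreal (F (x - y) * G y) \<partial>lebesgue) \<le> ennreal (1 powr 0 * a powr (1/P) * b powr (1/Q))"
    by (rule holder_pt[OF Fm Gm F0 G0 w PQ' pos _ IA IB]) auto
  have "ennreal (Hc x) \<le> ennreal C0 * ennreal (a powr (1/P) * b powr (1/Q))"
    using PB[of x] H by simp (meson mult_left_mono order.trans zero_le)
  also have "\<dots> = ennreal (C0 * a powr (1/P) * b powr (1/Q))"
    using C0 by (simp add: ennreal_mult mult.assoc)
  finally show ?thesis .
qed

lemma PB_lemma:
  fixes v :: "'a::euclidean_space \<Rightarrow> real" and f1 f2 :: "'a \<Rightarrow> complex"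
  assumes vpos: "\<And>x. v x > 0" and C0: "C0 > 0"
    and sub: "\<And>x y. v (x + y) \<le> C0 * v x * v y"
    and m1: "f1 \<in> borel_measurable lebesgue" and m2: "f2 \<in> borel_measurable lebesgue"
    and vm: "v \<in> borel_measurable lebesgue"
  shows "ennreal (cmod (conv f1 f2 x * complex_of_real (v x)))
     \<le> ennreal C0 * (\<integral>\<^sup>+y. ennreal ((cmod (f1 (x - y)) * v (x - y)) * (cmod (f2 y) * v y)) \<partial>lebesgue)"
proof (cases "integrable lebesgue (\<lambda>y. f1 (x - y) * f2 y)")
  case False
  then have "conv f1 f2 x = 0" by (simp add: conv_def not_integrable_integral_eq)
  then show ?thesis by simp
next
  case True
  have [measurable]: "(\<lambda>y. f1 (x - y)) \<in> borel_measurable lebesgue" "(\<lambda>y. v (x - y)) \<in> borel_measurable lebesgue"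
    using measurable_reflect[OF m1] measurable_reflect[OF vm] by auto
  have [measurable]: "f2 \<in> borel_measurable lebesgue" "v \<in> borel_measurable lebesgue" using m2 vm by auto
  have vx: "v x \<ge> 0" using vpos[of x] by simp
  have "ennreal (cmod (conv f1 f2 x * complex_of_real (v x))) = ennreal (cmod (conv f1 f2 x)) * ennreal (v x)"
    using vx by (simp add: norm_mult ennreal_mult)
  also have "\<dots> \<le> (\<integral>\<^sup>+y. ennreal (cmod (f1 (x - y) * f2 y)) \<partial>lebesgue) * ennreal (v x)"
    using integral_norm_bound_ennreal[OF True] by (intro mult_right_mono) (auto simp: conv_def)
  also have "\<dots> = (\<integral>\<^sup>+y. ennreal (cmod (f1 (x - y) * f2 y)) * ennreal (v x) \<partial>lebesgue)"
    by (rule nn_integral_multc[symmetric]) measurable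
  also have "\<dots> \<le> (\<integral>\<^sup>+y. ennreal C0 * ennreal ((cmod (f1 (x - y)) * v (x - y)) * (cmod (f2 y) * v y)) \<partial>lebesgue)"
  proof (intro nn_integral_mono)
    fix y
    have "v x = v ((x - y) + y)" by simp
    also have "\<dots> \<le> C0 * v (x - y) * v y" by (rule sub)
    finally have "cmod (f1 (x - y)) * cmod (f2 y) * v x \<le> cmod (f1 (x - y)) * cmod (f2 y) * (C0 * v (x - y) * v y)"
      by (intro mult_left_mono) auto
    then have "ennreal (cmod (f1 (x - y)) * cmod (f2 y) * v x)
        \<le> ennreal (C0 * ((cmod (f1 (x - y)) * v (x - y)) * (cmod (f2 y) * v y)))"
      by (intro ennreal_leI) (simp add: algebra_simps)
    then show "ennreal (cmod (f1 (x - y) * f2 y)) * ennreal (v x)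
        \<le> ennreal C0 * ennreal ((cmod (f1 (x - y)) * v (x - y)) * (cmod (f2 y) * v y))"
      using C0 vx by (simp add: norm_mult ennreal_mult'[symmetric] ennreal_mult''[symmetric])
  qed
  also have "\<dots> = ennreal C0 * (\<integral>\<^sup>+y. ennreal ((cmod (f1 (x - y)) * v (x - y)) * (cmod (f2 y) * v y)) \<partial>lebesgue)"
    by (rule nn_integral_cmult) measurable
  finally show ?thesis .
qed

lemma ennreal_eq1:
  assumes "1 + ennreal a = ennreal c" "a \<ge> 0" "c \<ge> 0"
  shows "1 + a = c"
proof -
  have e1: "ennreal (1 + a) = 1 + ennreal a" using assms by (simp add: ennreal_plus)
  have "ennreal (1 + a) = ennreal c" by (simp only: e1 assms(1))
  moreover have "0 \<le> 1 + a" using assms by auto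
  ultimately show ?thesis using ennreal_inj[of "1+a" c] assms by blast
qed

lemma forward:
  fixes v :: "'a::euclidean_space \<Rightarrow> real" and C\<^sub>0 :: real and p q r :: ennreal
    and f\<^sub>1 f\<^sub>2 :: "'a \<Rightarrow> complex"
  assumes vc: "continuous_on UNIV v" and vpos: "\<forall>x. v x > 0" and C0: "C\<^sub>0 > 0"
    and sub: "\<forall>x y. v (x + y) \<le> C\<^sub>0 * v x * v y"
    and pqr: "1 \<le> p" "1 \<le> q" "1 \<le> r" "1 + inverse r = inverse p + inverse q"
    and m1: "f\<^sub>1 \<in> borel_measurable lebesgue" and m2: "f\<^sub>2 \<in> borel_measurable lebesgue"
  shows "Lp_norm r (\<lambda>x. conv f\<^sub>1 f\<^sub>2 x * complex_of_real (v x))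
         \<le> ennreal C\<^sub>0 * Lp_norm p (\<lambda>x. f\<^sub>1 x * complex_of_real (v x))
                       * Lp_norm q (\<lambda>x. f\<^sub>2 x * complex_of_real (v x))"
proof -
  have vpos': "\<And>x. v x > 0" using vpos by auto
  have sub': "\<And>x y. v (x + y) \<le> C\<^sub>0 * v x * v y" using sub by auto
  have "v \<in> borel_measurable lborel"
    using borel_measurable_continuous_onI[OF vc] by simp
  then have vm: "v \<in> borel_measurable lebesgue" by (rule measurable_completion)
  have [measurable]: "v \<in> borel_measurable lebesgue" "f\<^sub>1 \<in> borel_measurable lebesgue"
    "f\<^sub>2 \<in> borel_measurable lebesgue" using vm m1 m2 by auto
  define F where "F z = cmod (f\<^sub>1 z) * v z" for z
  define G where "G z = cmod (f\<^sub>2 z) * v z" for z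
  have Fm: "F \<in> borel_measurable lebesgue" unfolding F_def by measurable
  have Gm: "G \<in> borel_measurable lebesgue" unfolding G_def by measurable
  have F0: "\<And>z. F z \<ge> 0" and G0: "\<And>z. G z \<ge> 0"
    using vpos' by (auto simp: F_def G_def less_imp_le)
  have cF: "\<And>z. cmod (f\<^sub>1 z * complex_of_real (v z)) = F z"
    using vpos' by (simp add: F_def norm_mult less_imp_le)
  have cG: "\<And>z. cmod (f\<^sub>2 z * complex_of_real (v z)) = G z"
    using vpos' by (simp add: G_def norm_mult less_imp_le)
  define Hc where "Hc x = cmod (conv f\<^sub>1 f\<^sub>2 x * complex_of_real (v x))" for x
  have Hc0: "\<And>x. Hc x \<ge> 0" by (simp add: Hc_def)
  have PB: "\<And>x. ennreal (Hc x) \<le> ennreal C\<^sub>0 * (\<integral>\<^sup>+y. ennreal (F (x - y) * G y) \<partial>lebesgue)"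
    unfolding Hc_def F_def G_def by (rule PB_lemma[OF vpos' C0 sub' m1 m2 vm])
  define NA where "NA = Lp_norm p (\<lambda>x. f\<^sub>1 x * complex_of_real (v x))"
  define NB where "NB = Lp_norm q (\<lambda>x. f\<^sub>2 x * complex_of_real (v x))"
  have LHS: "Lp_norm r (\<lambda>x. conv f\<^sub>1 f\<^sub>2 x * complex_of_real (v x)) = Lp_norm r (\<lambda>x. conv f\<^sub>1 f\<^sub>2 x * complex_of_real (v x))" ..
  show ?thesis
    unfolding NA_def[symmetric] NB_def[symmetric]
  proof (cases "NA = 0 \<or> NB = 0")
    case True
    have H0: "(\<integral>\<^sup>+y. ennreal (F (x - y) * G y) \<partial>lebesgue) = 0" for x
      using True
    proof
      assume "NA = 0"
      then have "AE z in lebesgue. f\<^sub>1 z * complex_of_real (v z) = 0"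
        unfolding NA_def by (rule Lp_zero_AE) (use pqr(1) in auto)
      then have "AE z in lebesgue. F z = 0"
        by (rule eventually_mono) (metis cF norm_zero)
      then have "AE y in lebesgue. F (x - y) = 0" by (rule AE_reflect)
      then have "AE y in lebesgue. ennreal (F (x - y) * G y) = 0"
        by (rule eventually_mono) simp
      then show ?thesis by (simp add: nn_integral_cong_AE)
    next
      assume "NB = 0"
      then have "AE z in lebesgue. f\<^sub>2 z * complex_of_real (v z) = 0"
        unfolding NB_def by (rule Lp_zero_AE) (use pqr(2) in auto)
      then have "AE z in lebesgue. G z = 0"
        by (rule eventually_mono) (metis cG norm_zero)
      then have "AE y in lebesgue. ennreal (F (x - y) * G y) = 0"
        by (rule eventually_mono) simp
      then show ?thesis by (simp add: nn_integral_cong_AE)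
    qed
    have "Hc x = 0" for x using PB[of x] H0[of x] Hc0[of x] by simp
    then have "(\<lambda>x. conv f\<^sub>1 f\<^sub>2 x * complex_of_real (v x)) = (\<lambda>x. 0)"
      by (auto simp: Hc_def)
    then show "Lp_norm r (\<lambda>x. conv f\<^sub>1 f\<^sub>2 x * complex_of_real (v x)) \<le> ennreal C\<^sub>0 * NA * NB"
      by (simp add: Lp_zero_fun)
  next
    case nz: False
    show "Lp_norm r (\<lambda>x. conv f\<^sub>1 f\<^sub>2 x * complex_of_real (v x)) \<le> ennreal C\<^sub>0 * NA * NB"
    proof (cases "NA = top \<or> NB = top")
      case True
      then have "ennreal C\<^sub>0 * NA * NB = top" using nz C0 by (auto simp: ennreal_mult_eq_top_iff)
      then show ?thesis by simp
    next
      case fin: False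
      have NA0: "NA \<noteq> 0" "NA \<noteq> top" and NB0: "NB \<noteq> 0" "NB \<noteq> top" using nz fin by auto
      have AEF: "AE z in lebesgue. ennreal (F z) \<le> NA" if "p = top"
        using Lp_top_AE[of "\<lambda>x. f\<^sub>1 x * complex_of_real (v x)"] unfolding NA_def that cF .
      have AEG: "AE z in lebesgue. ennreal (G z) \<le> NB" if "q = top"
        using Lp_top_AE[of "\<lambda>x. f\<^sub>2 x * complex_of_real (v x)"] unfolding NB_def that cG .
      have NA1: "NA = (\<integral>\<^sup>+z. ennreal (F z) \<partial>lebesgue)" if "p = 1"
        unfolding NA_def that Lp_one cF ..
      have NB1: "NB = (\<integral>\<^sup>+z. ennreal (G z) \<partial>lebesgue)" if "q = 1"
        unfolding NB_def that Lp_one cG ..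
      have NAfin: "\<exists>a>0. (\<integral>\<^sup>+z. ennreal (F z powr P) \<partial>lebesgue) = ennreal a \<and> NA = ennreal (a powr (1 / P))"
        if "p = ennreal P" "P \<ge> 1" for P
      proof -
        have "p \<noteq> top" using that by simp
        obtain a where a: "a \<ge> 0" "(\<integral>\<^sup>+x. ennreal (cmod (f\<^sub>1 x * complex_of_real (v x)) powr enn2real p) \<partial>lebesgue) = ennreal a"
          "NA = ennreal (a powr (1 / enn2real p))"
          using Lp_fin[OF \<open>p \<noteq> top\<close> NA0(2)[unfolded NA_def]] unfolding NA_def by blast
        have "a \<noteq> 0" using a NA0 by auto
        then show ?thesis using a that by (intro exI[of _ a]) (auto simp: cF)
      qed
      have NBfin: "\<exists>b>0. (\<integral>\<^sup>+z. ennreal (G z powr Q) \<partial>lebesgue) = ennreal b \<and> NB = ennreal (b powr (1 / Q))"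
        if "q = ennreal Q" "Q \<ge> 1" for Q
      proof -
        have "q \<noteq> top" using that by simp
        obtain b where b: "b \<ge> 0" "(\<integral>\<^sup>+x. ennreal (cmod (f\<^sub>2 x * complex_of_real (v x)) powr enn2real q) \<partial>lebesgue) = ennreal b"
          "NB = ennreal (b powr (1 / enn2real q))"
          using Lp_fin[OF \<open>q \<noteq> top\<close> NB0(2)[unfolded NB_def]] unfolding NB_def by blast
        have "b \<noteq> 0" using b NB0 by auto
        then show ?thesis using b that by (intro exI[of _ b]) (auto simp: cG)
      qed
      have RHSeq: "ennreal C\<^sub>0 * ennreal (a powr (1 / P)) * ennreal (b powr (1 / Q))
          = ennreal (C\<^sub>0 * a powr (1 / P) * b powr (1 / Q))" for a b P Q
        using C0 by (simp add: ennreal_mult)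
      have Hc_eq: "ennreal (cmod (conv f\<^sub>1 f\<^sub>2 x * complex_of_real (v x))) = ennreal (Hc x)" for x
        by (simp add: Hc_def)
      show ?thesis
      proof (cases rule: ennreal_ge1_cases[OF pqr(3)])
        case rtop: 1
        have eq: "1 = inverse p + inverse q" using pqr(4) rtop by simp
        have "ennreal (Hc x) \<le> ennreal C\<^sub>0 * NA * NB" for x
        proof (cases rule: ennreal_ge1_cases[OF pqr(1)])
          case ptop: 1
          have q1: "q = 1"
          proof (cases rule: ennreal_ge1_cases[OF pqr(2)])
            case 1 then show ?thesis using eq ptop by simp
          next
            case (2 Q)
            then have "1 = ennreal 0 + ennreal (1 / Q)" using eq ptop by simp
            then have "1 = 0 + 1 / Q" by (rule ennreal_eq2) (use 2 in auto)
            then show ?thesis using 2 by simp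
          qed
          have "AE y in lebesgue. ennreal (F (x - y)) \<le> NA" by (rule AE_reflect) (rule AEF[OF ptop])
          then have "(\<integral>\<^sup>+y. ennreal (F (x - y) * G y) \<partial>lebesgue) \<le> (\<integral>\<^sup>+y. NA * ennreal (G y) \<partial>lebesgue)"
            by (intro nn_integral_mono_AE, elim eventually_mono) (simp add: ennreal_mult'' G0 mult_right_mono)
          also have "\<dots> = NA * NB" using Gm by (simp add: nn_integral_cmult NB1[OF q1])
          finally show ?thesis using PB[of x] by (simp add: mult.assoc) (meson mult_left_mono order.trans zero_le)
        next
          case (2 P)
          show ?thesis
          proof (cases rule: ennreal_ge1_cases[OF pqr(2)])
            case qtop: 1
            have "1 = ennreal (1 / P) + ennreal 0" using eq qtop 2 by simp
            then have "1 = 1 / P + 0" by (rule ennreal_eq2) (use 2 in auto)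
            then have p1: "p = 1" using 2 by simp
            have "AE y in lebesgue. ennreal (G y) \<le> NB" by (rule AEG[OF qtop])
            then have "(\<integral>\<^sup>+y. ennreal (F (x - y) * G y) \<partial>lebesgue) \<le> (\<integral>\<^sup>+y. ennreal (F (x - y)) * NB \<partial>lebesgue)"
              by (intro nn_integral_mono_AE, elim eventually_mono) (simp add: ennreal_mult' F0 mult_left_mono)
            also have "\<dots> = (\<integral>\<^sup>+y. ennreal (F (x - y)) \<partial>lebesgue) * NB"
              using measurable_reflect[OF Fm, of x] by (simp add: nn_integral_multc)
            also have "\<dots> = NA * NB"
              using nn_integral_reflect[of "\<lambda>z. ennreal (F z)" x] Fm by (simp add: NA1[OF p1])
            finally show ?thesis using PB[of x] by (simp add: mult.assoc) (meson mult_left_mono order.trans zero_le)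
          next
            case (2 Q)
            have "1 = ennreal (1 / P) + ennreal (1 / Q)" using eq \<open>inverse p = _\<close> \<open>inverse q = _\<close> by simp
            then have PQ: "1 = 1 / P + 1 / Q" by (rule ennreal_eq2) (use \<open>P \<ge> 1\<close> \<open>Q \<ge> 1\<close> in auto)
            obtain a where a: "a > 0" "(\<integral>\<^sup>+z. ennreal (F z powr P) \<partial>lebesgue) = ennreal a" "NA = ennreal (a powr (1 / P))"
              using NAfin[of P] \<open>p = ennreal P\<close> \<open>P \<ge> 1\<close> by blast
            obtain b where b: "b > 0" "(\<integral>\<^sup>+z. ennreal (G z powr Q) \<partial>lebesgue) = ennreal b" "NB = ennreal (b powr (1 / Q))"
              using NBfin[of Q] 2 by blast
            have "ennreal (Hc x) \<le> ennreal (C\<^sub>0 * a powr (1 / P) * b powr (1 / Q))"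
              by (rule young_inf[OF Fm Gm F0 G0 C0 PB _ _ _ a(1) b(1) a(2) b(2)]) (use PQ \<open>P \<ge> 1\<close> 2 in auto)
            then show ?thesis using a b RHSeq by simp
          qed
        qed
        then show ?thesis unfolding rtop by (intro Lp_top_upper) (simp add: Hc_eq)
      next
        case (2 R)
        have pfin: "p \<noteq> top"
        proof
          assume ptop: "p = top"
          show False
          proof (cases rule: ennreal_ge1_cases[OF pqr(2)])
            case 1 then show False using pqr(4) ptop 2 by simp
          next
            case (2 Q)
            then have "1 + ennreal (1 / R) = ennreal (1 / Q)" using pqr(4) ptop \<open>inverse r = _\<close> by simp
            then have "1 + 1 / R = 1 / Q" by (rule ennreal_eq1) (use \<open>R \<ge> 1\<close> 2 in auto)
            moreover have "1 / Q \<le> 1" "1 / R > 0" using 2 \<open>R \<ge> 1\<close> by auto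
            ultimately show False by linarith
          qed
        qed
        have qfin: "q \<noteq> top"
        proof
          assume qtop: "q = top"
          show False
          proof (cases rule: ennreal_ge1_cases[OF pqr(1)])
            case 1 then show False using pfin by simp
          next
            case (2 P)
            then have "1 + ennreal (1 / R) = ennreal (1 / P)" using pqr(4) qtop \<open>inverse r = _\<close> by simp
            then have "1 + 1 / R = 1 / P" by (rule ennreal_eq1) (use \<open>R \<ge> 1\<close> 2 in auto)
            moreover have "1 / P \<le> 1" "1 / R > 0" using 2 \<open>R \<ge> 1\<close> by auto
            ultimately show False by linarith
          qed
        qed
        obtain P where P: "p = ennreal P" "P \<ge> 1" "inverse p = ennreal (1 / P)"
          using ennreal_ge1_cases[OF pqr(1)] pfin by metis
        obtain Q where Q: "q = ennreal Q" "Q \<ge> 1" "inverse q = ennreal (1 / Q)"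
          using ennreal_ge1_cases[OF pqr(2)] qfin by metis
        have "1 + ennreal (1 / R) = ennreal (1 / P) + ennreal (1 / Q)"
          using pqr(4) P Q 2 by simp
        then have PQR: "1 + 1 / R = 1 / P + 1 / Q" by (rule ennreal_eq3) (use P Q 2 in auto)
        obtain a where a: "a > 0" "(\<integral>\<^sup>+z. ennreal (F z powr P) \<partial>lebesgue) = ennreal a" "NA = ennreal (a powr (1 / P))"
          using NAfin[of P] P by blast
        obtain b where b: "b > 0" "(\<integral>\<^sup>+z. ennreal (G z powr Q) \<partial>lebesgue) = ennreal b" "NB = ennreal (b powr (1 / Q))"
          using NBfin[of Q] Q by blast
        have I: "(\<integral>\<^sup>+x. ennreal (Hc x powr R) \<partial>lebesgue) \<le> ennreal ((C\<^sub>0 * a powr (1/P) * b powr (1/Q)) powr R)"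
          by (rule young_fin[OF Fm Gm F0 G0 Hc0 C0 PB _ _ _ PQR a(1) b(1) a(2) b(2)]) (use P Q 2 in auto)
        have "Lp_norm r (\<lambda>x. conv f\<^sub>1 f\<^sub>2 x * complex_of_real (v x)) \<le> ennreal (C\<^sub>0 * a powr (1/P) * b powr (1/Q))"
          by (rule Lp_fin_upper) (use 2 I C0 in \<open>auto simp: Hc_def\<close>)
        then show ?thesis using a b RHSeq by simp
      qed
    qed
  qed
qed

lemma ball_leb: "ball c e \<in> sets lebesgue"
  using lmeasurable_ball[of c e] by (simp add: fmeasurable_def)

lemma ball_emeasure: "emeasure lebesgue (ball c e) = ennreal (measure lebesgue (ball c e))"
  using lmeasurable_ball[of c e] by (simp add: emeasure_eq_measure2)

lemma ball_pos:
  fixes c :: "'a::euclidean_space"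
  assumes "e > 0" shows "measure lebesgue (ball c e) > 0"
proof -
  have "measure lebesgue (ball c e) = measure lborel (ball c e)"
    by (intro measure_completion) simp
  then show ?thesis using content_ball_pos[OF assms, of c] by simp
qed

lemma Lp_top_lower:
  fixes f :: "'a::euclidean_space \<Rightarrow> complex"
  assumes e: "e > 0" and lb: "\<And>z. z \<in> ball c e \<Longrightarrow> d \<le> cmod (f z)"
  shows "ennreal d \<le> Lp_norm top f"
  unfolding Lp_norm_def
proof (simp, rule Inf_greatest, safe)
  fix c' assume AE: "AE x in lebesgue. ennreal (cmod (f x)) \<le> c'"
  show "ennreal d \<le> c'"
  proof (rule ccontr)
    assume "\<not> ennreal d \<le> c'"
    then have lt: "c' < ennreal d" by simp
    have "AE z in lebesgue. z \<notin> ball c e"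
      using AE
    proof (rule eventually_mono)
      fix z assume le: "ennreal (cmod (f z)) \<le> c'"
      show "z \<notin> ball c e"
      proof
        assume "z \<in> ball c e"
        then have "ennreal d \<le> ennreal (cmod (f z))" using lb by (intro ennreal_leI) auto
        then show False using le lt by (meson order.trans leD)
      qed
    qed
    then have "emeasure lebesgue (ball c e) = 0"
      by (subst (asm) AE_iff_measurable[OF ball_leb]) auto
    then show False using ball_pos[OF e, of c] by (simp add: ball_emeasure)
  qed
qed

lemma converse_eta:
  fixes v :: "'a::euclidean_space \<Rightarrow> real" and C\<^sub>0 :: real and x y :: 'a
  assumes vc: "continuous_on UNIV v" and vpos: "\<forall>x. v x > 0" and C0: "C\<^sub>0 > 0"
    and H: "\<forall>p q r :: ennreal. \<forall>f\<^sub>1 f\<^sub>2 :: 'a \<Rightarrow> complex.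
       1 \<le> p \<and> 1 \<le> q \<and> 1 \<le> r \<and> 1 + inverse r = inverse p + inverse q \<and>
       f\<^sub>1 \<in> borel_measurable lebesgue \<and> f\<^sub>2 \<in> borel_measurable lebesgue \<longrightarrow>
       Lp_norm r (\<lambda>x. conv f\<^sub>1 f\<^sub>2 x * complex_of_real (v x))
         \<le> ennreal C\<^sub>0 * Lp_norm p (\<lambda>x. f\<^sub>1 x * complex_of_real (v x))
                       * Lp_norm q (\<lambda>x. f\<^sub>2 x * complex_of_real (v x))"
    and eta: "\<eta> > 0"
  shows "v (x + y) - \<eta> \<le> C\<^sub>0 * (v x + \<eta>) * (v y + \<eta>)"
proof (cases "v (x + y) - \<eta> \<le> 0")
  case True
  have "0 \<le> C\<^sub>0 * (v x + \<eta>) * (v y + \<eta>)"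
    using C0 vpos eta by (intro mult_nonneg_nonneg) (auto simp: less_imp_le add_nonneg_nonneg)
  then show ?thesis using True by linarith
next
  case False
  define lo where "lo = v (x + y) - \<eta>"
  have lo: "lo > 0" using False lo_def by simp
  have cont: "\<exists>d>0. \<forall>z. dist z c < d \<longrightarrow> \<bar>v z - v c\<bar> < \<eta>" for c
    using vc eta unfolding continuous_on_iff by (auto simp: dist_real_def)
  obtain d1 where d1: "d1 > 0" "\<And>z. dist z x < d1 \<Longrightarrow> \<bar>v z - v x\<bar> < \<eta>" using cont[of x] by blast
  obtain d2 where d2: "d2 > 0" "\<And>z. dist z y < d2 \<Longrightarrow> \<bar>v z - v y\<bar> < \<eta>" using cont[of y] by blast
  obtain d3 where d3: "d3 > 0" "\<And>z. dist z (x + y) < d3 \<Longrightarrow> \<bar>v z - v (x + y)\<bar> < \<eta>"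
    using cont[of "x + y"] by blast
  define \<epsilon> where "\<epsilon> = min d1 (min d2 d3) / 2"
  have \<epsilon>: "\<epsilon> > 0" "2 * \<epsilon> \<le> d1" "\<epsilon> \<le> d2" "\<epsilon> \<le> d3" using d1 d2 d3 by (auto simp: \<epsilon>_def)
  define f1 :: "'a \<Rightarrow> complex" where "f1 = indicator (ball x (2 * \<epsilon>))"
  define f2 :: "'a \<Rightarrow> complex" where "f2 = indicator (ball y \<epsilon>)"
  have m1: "f1 \<in> borel_measurable lebesgue" unfolding f1_def by (intro borel_measurable_indicator ball_leb)
  have m2: "f2 \<in> borel_measurable lebesgue" unfolding f2_def by (intro borel_measurable_indicator ball_leb)
  define m where "m = measure lebesgue (ball y \<epsilon>)"
  have m: "m > 0" unfolding m_def by (rule ball_pos) (use \<epsilon> in auto)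
  have main: "Lp_norm top (\<lambda>x. conv f1 f2 x * complex_of_real (v x))
         \<le> ennreal C\<^sub>0 * Lp_norm top (\<lambda>x. f1 x * complex_of_real (v x))
                       * Lp_norm 1 (\<lambda>x. f2 x * complex_of_real (v x))"
    using H m1 m2 by simp
  have convval: "conv f1 f2 z = complex_of_real m" if z: "z \<in> ball (x + y) \<epsilon>" for z
  proof -
    have "conv f1 f2 z = (\<integral>w. complex_of_real (indicator (ball y \<epsilon>) w) \<partial>lebesgue)"
      unfolding conv_def
    proof (intro Bochner_Integration.integral_cong refl)
      fix w
      show "f1 (z - w) * f2 w = complex_of_real (indicator (ball y \<epsilon>) w)"
      proof (cases "w \<in> ball y \<epsilon>")
        case True
        have "norm (x - (z - w)) = norm ((x + y - z) + (w - y))" by (simp add: algebra_simps)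
        also have "\<dots> \<le> norm (x + y - z) + norm (w - y)" by (rule norm_triangle_ineq)
        also have "\<dots> < \<epsilon> + \<epsilon>"
          using z True by (intro add_strict_mono) (auto simp: dist_norm norm_minus_commute)
        finally have "z - w \<in> ball x (2 * \<epsilon>)" by (simp add: dist_norm)
        then show ?thesis using True by (simp add: f1_def f2_def)
      next
        case False then show ?thesis by (simp add: f2_def)
      qed
    qed
    also have "\<dots> = complex_of_real m"
      by (simp add: m_def)
    finally show ?thesis .
  qed
  have L: "ennreal (m * lo) \<le> Lp_norm top (\<lambda>x. conv f1 f2 x * complex_of_real (v x))"
  proof (rule Lp_top_lower[OF \<epsilon>(1)])
    fix z assume z: "z \<in> ball (x + y) \<epsilon>"
    have "dist z (x + y) < d3" using z \<epsilon> by (auto simp: dist_commute)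
    then have "lo \<le> v z" using d3(2)[of z] by (auto simp: lo_def)
    then have "m * lo \<le> m * v z" using m by (intro mult_left_mono) auto
    also have "\<dots> = cmod (conv f1 f2 z * complex_of_real (v z))"
      using convval[OF z] m vpos by (simp add: norm_mult abs_of_pos)
    finally show "m * lo \<le> cmod (conv f1 f2 z * complex_of_real (v z))" .
  qed
  have U1: "Lp_norm top (\<lambda>x. f1 x * complex_of_real (v x)) \<le> ennreal (v x + \<eta>)"
  proof (rule Lp_top_upper)
    fix z
    show "ennreal (cmod (f1 z * complex_of_real (v z))) \<le> ennreal (v x + \<eta>)"
    proof (cases "z \<in> ball x (2 * \<epsilon>)")
      case True
      then have "dist z x < d1" using \<epsilon> by (auto simp: dist_commute)
      then have "v z \<le> v x + \<eta>" using d1(2)[of z] by auto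
      then show ?thesis using True vpos by (intro ennreal_leI) (simp add: f1_def norm_mult abs_of_pos)
    next
      case False then show ?thesis by (simp add: f1_def)
    qed
  qed
  have U2: "Lp_norm 1 (\<lambda>x. f2 x * complex_of_real (v x)) \<le> ennreal ((v y + \<eta>) * m)"
  proof -
    have "Lp_norm 1 (\<lambda>x. f2 x * complex_of_real (v x))
        = (\<integral>\<^sup>+z. ennreal (cmod (f2 z * complex_of_real (v z))) \<partial>lebesgue)" by (rule Lp_one)
    also have "\<dots> \<le> (\<integral>\<^sup>+z. ennreal (v y + \<eta>) * indicator (ball y \<epsilon>) z \<partial>lebesgue)"
    proof (intro nn_integral_mono)
      fix z
      show "ennreal (cmod (f2 z * complex_of_real (v z))) \<le> ennreal (v y + \<eta>) * indicator (ball y \<epsilon>) z"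
      proof (cases "z \<in> ball y \<epsilon>")
        case True
        then have "dist z y < d2" using \<epsilon> by (auto simp: dist_commute)
        then have "v z \<le> v y + \<eta>" using d2(2)[of z] by auto
        then show ?thesis using True vpos by (simp add: f2_def norm_mult abs_of_pos ennreal_leI)
      next
        case False then show ?thesis by (simp add: f2_def)
      qed
    qed
    also have "\<dots> = ennreal (v y + \<eta>) * emeasure lebesgue (ball y \<epsilon>)"
      by (rule nn_integral_cmult_indicator[OF ball_leb])
    also have "\<dots> = ennreal ((v y + \<eta>) * m)"
      unfolding ball_emeasure m_def[symmetric] using m by (rule ennreal_mult''[symmetric, OF less_imp_le])
    finally show ?thesis .
  qed
  have "ennreal (m * lo) \<le> ennreal C\<^sub>0 * ennreal (v x + \<eta>) * ennreal ((v y + \<eta>) * m)"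
  proof -
    have "ennreal C\<^sub>0 * Lp_norm top (\<lambda>x. f1 x * complex_of_real (v x)) \<le> ennreal C\<^sub>0 * ennreal (v x + \<eta>)"
      using U1 by (rule mult_left_mono) simp
    then have "ennreal C\<^sub>0 * Lp_norm top (\<lambda>x. f1 x * complex_of_real (v x)) * Lp_norm 1 (\<lambda>x. f2 x * complex_of_real (v x))
        \<le> ennreal C\<^sub>0 * ennreal (v x + \<eta>) * ennreal ((v y + \<eta>) * m)"
      using U2 by (rule mult_mono) auto
    then show ?thesis using L main by (meson order.trans)
  qed
  also have "\<dots> = ennreal (C\<^sub>0 * (v x + \<eta>) * ((v y + \<eta>) * m))"
  proof -
    have vx: "v x > 0" "v y > 0" using vpos by auto
    have h: "C\<^sub>0 \<ge> 0" "v x + \<eta> \<ge> 0" "(v y + \<eta>) * m \<ge> 0"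
      using C0 vx eta m by auto
    show ?thesis
      by (simp only: ennreal_mult[OF h(1) h(2)] ennreal_mult[OF mult_nonneg_nonneg[OF h(1) h(2)] h(3)])
  qed
  finally have E: "ennreal (m * lo) \<le> ennreal (C\<^sub>0 * (v x + \<eta>) * ((v y + \<eta>) * m))" .
  have vx: "v x > 0" "v y > 0" using vpos by auto
  have pos: "0 \<le> C\<^sub>0 * (v x + \<eta>) * ((v y + \<eta>) * m)" using C0 vx eta m by auto
  have "m * lo \<le> C\<^sub>0 * (v x + \<eta>) * ((v y + \<eta>) * m)" using E pos by simp
  then have "m * lo \<le> m * (C\<^sub>0 * (v x + \<eta>) * (v y + \<eta>))" by (simp add: algebra_simps)
  then show ?thesis using m by (simp add: lo_def)
qed

lemma eta_limit:
  fixes A B D c :: real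
  assumes H: "\<And>\<eta>. \<eta> > 0 \<Longrightarrow> A - \<eta> \<le> c * (B + \<eta>) * (D + \<eta>)"
  shows "A \<le> c * B * D"
proof -
  have lim: "((\<lambda>\<eta>. c * (B + \<eta>) * (D + \<eta>) + \<eta>) \<longlongrightarrow> c * (B + 0) * (D + 0) + 0) (at_right (0::real))"
    by (intro tendsto_intros tendsto_ident_at)
  have ev: "eventually (\<lambda>\<eta>. A \<le> c * (B + \<eta>) * (D + \<eta>) + \<eta>) (at_right (0::real))"
  proof (rule eventually_at_rightI[of 0 1])
    fix \<eta> :: real assume "\<eta> \<in> {0<..<1}"
    then show "A \<le> c * (B + \<eta>) * (D + \<eta>) + \<eta>" using H[of \<eta>] by auto
  qed simp
  have "A \<le> c * (B + 0) * (D + 0) + 0"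
    by (rule tendsto_lowerbound[OF lim ev]) simp
  then show ?thesis by simp
qed

theorem proposition3p1:
  fixes v :: "'a::euclidean_space \<Rightarrow> real" and C\<^sub>0 :: real
  assumes "continuous_on UNIV v" and "\<forall>x. v x > 0" and "C\<^sub>0 > 0"
  shows "(\<forall>x y. v (x + y) \<le> C\<^sub>0 * v x * v y) \<longleftrightarrow>
    (\<forall>p q r :: ennreal. \<forall>f\<^sub>1 f\<^sub>2 :: 'a \<Rightarrow> complex.
       1 \<le> p \<and> 1 \<le> q \<and> 1 \<le> r \<and> 1 + inverse r = inverse p + inverse q \<and>
       f\<^sub>1 \<in> borel_measurable lebesgue \<and> f\<^sub>2 \<in> borel_measurable lebesgue \<longrightarrow>
       Lp_norm r (\<lambda>x. conv f\<^sub>1 f\<^sub>2 x * complex_of_real (v x))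
         \<le> ennreal C\<^sub>0 * Lp_norm p (\<lambda>x. f\<^sub>1 x * complex_of_real (v x))
                       * Lp_norm q (\<lambda>x. f\<^sub>2 x * complex_of_real (v x)))"
proof
  assume sub: "\<forall>x y. v (x + y) \<le> C\<^sub>0 * v x * v y"
  show "\<forall>p q r :: ennreal. \<forall>f\<^sub>1 f\<^sub>2 :: 'a \<Rightarrow> complex.
       1 \<le> p \<and> 1 \<le> q \<and> 1 \<le> r \<and> 1 + inverse r = inverse p + inverse q \<and>
       f\<^sub>1 \<in> borel_measurable lebesgue \<and> f\<^sub>2 \<in> borel_measurable lebesgue \<longrightarrow>
       Lp_norm r (\<lambda>x. conv f\<^sub>1 f\<^sub>2 x * complex_of_real (v x))
         \<le> ennreal C\<^sub>0 * Lp_norm p (\<lambda>x. f\<^sub>1 x * complex_of_real (v x))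
                       * Lp_norm q (\<lambda>x. f\<^sub>2 x * complex_of_real (v x))"
    using forward[OF assms sub] by blast
next
  assume H: "\<forall>p q r :: ennreal. \<forall>f\<^sub>1 f\<^sub>2 :: 'a \<Rightarrow> complex.
       1 \<le> p \<and> 1 \<le> q \<and> 1 \<le> r \<and> 1 + inverse r = inverse p + inverse q \<and>
       f\<^sub>1 \<in> borel_measurable lebesgue \<and> f\<^sub>2 \<in> borel_measurable lebesgue \<longrightarrow>
       Lp_norm r (\<lambda>x. conv f\<^sub>1 f\<^sub>2 x * complex_of_real (v x))
         \<le> ennreal C\<^sub>0 * Lp_norm p (\<lambda>x. f\<^sub>1 x * complex_of_real (v x))
                       * Lp_norm q (\<lambda>x. f\<^sub>2 x * complex_of_real (v x))"
  show "\<forall>x y. v (x + y) \<le> C\<^sub>0 * v x * v y"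
  proof (intro allI)
    fix x y :: 'a
    show "v (x + y) \<le> C\<^sub>0 * v x * v y"
      by (rule eta_limit) (rule converse_eta[OF assms H])
  qed
qed

end
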